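(* Work in $\mathbf{Sets}$ with a set $S$ and the state monad $T$. Let $(X,h)$ be a $T$-algebra, let $Y=\{h(s'\mapsto (s,x)) \mid s\in S, x\in X\}\subseteq X$, and let $e_X:S\times X\to Y$ be the surjection $(s,x)\mapsto h(s'\mapsto (s,x))$. Let $e_X^*:X\to Y^S$ be its transpose, $e_X^*(x)=\big(s\mapsto h(s'\mapsto (s,x))\big)$. Then $e_X^*$ is a bijection, with inverse $y\mapsto h(s\mapsto (s,y[s]))$.
   Context: $T$ is the monad on $\mathbf{Sets}$ given by $TX=(S\times X)^S$, with unit $\eta_X(x)=(s\mapsto(s,x))$ and multiplication $\mu_X$ sending $s\mapsto (c[s], s'\mapsto (c'[s,s'],x[s,s']))$ to $s\mapsto (c'[s,c[s]],x[s,c[s]])$. A $T$-algebra is a pair $(X,h)$ with $h:TX\to X$ satisfying $h\circ Th=h\circ\mu_X$ and $h\circ\eta_X=\mathrm{id}_X$. Elements of $TX$ are written as maps $s\mapsto(\cdot,\cdot)$ from $S$ to $S\times X$. *)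

theory Defs
  imports "HOL-Library.FuncSet"
begin

definition TF :: "'s set \<Rightarrow> 'x set \<Rightarrow> ('s \<Rightarrow> 's \<times> 'x) set" where
  "TF S X = S \<rightarrow>\<^sub>E (S \<times> X)"

definition etaT :: "'s set \<Rightarrow> 'x \<Rightarrow> ('s \<Rightarrow> 's \<times> 'x)" where
  "etaT S x = (\<lambda>s\<in>S. (s, x))"

definition muT :: "'s set \<Rightarrow> ('s \<Rightarrow> 's \<times> ('s \<Rightarrow> 's \<times> 'x)) \<Rightarrow> ('s \<Rightarrow> 's \<times> 'x)" where
  "muT S F = (\<lambda>s\<in>S. snd (F s) (fst (F s)))"

definition Tmap :: "'s set \<Rightarrow> ('a \<Rightarrow> 'b) \<Rightarrow> ('s \<Rightarrow> 's \<times> 'a) \<Rightarrow> ('s \<Rightarrow> 's \<times> 'b)" where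
  "Tmap S f t = (\<lambda>s\<in>S. (fst (t s), f (snd (t s))))"

definition T_algebra :: "'s set \<Rightarrow> 'x set \<Rightarrow> (('s \<Rightarrow> 's \<times> 'x) \<Rightarrow> 'x) \<Rightarrow> bool" where
  "T_algebra S X h \<longleftrightarrow>
     (\<forall>t\<in>TF S X. h t \<in> X) \<and>
     (\<forall>F\<in>TF S (TF S X). h (Tmap S h F) = h (muT S F)) \<and>
     (\<forall>x\<in>X. h (etaT S x) = x)"

end

theory Submission
  imports Defs
begin

lemma algA:
  assumes alg: "T_algebra S X h" and p: "p \<in> TF S X" and s: "s \<in> S"
  shows "h (\<lambda>s'\<in>S. (s, h p)) = h (\<lambda>s'\<in>S. p s)"
proof -
  let ?F = "\<lambda>s'\<in>S. (s, p)"
  have F: "?F \<in> TF S (TF S X)" using p s by (auto simp: TF_def)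
  have "h (Tmap S h ?F) = h (muT S ?F)" using alg F unfolding T_algebra_def by blast
  moreover have "Tmap S h ?F = (\<lambda>s'\<in>S. (s, h p))" by (auto simp: Tmap_def)
  moreover have "muT S ?F = (\<lambda>s'\<in>S. p s)" by (auto simp: muT_def)
  ultimately show ?thesis by simp
qed

lemma algB:
  assumes alg: "T_algebra S X h" and x: "x \<in> X"
  shows "h (\<lambda>s\<in>S. (s, h (\<lambda>s'\<in>S. (s, x)))) = x"
proof -
  let ?F = "\<lambda>s\<in>S. (s, \<lambda>s'\<in>S. (s, x))"
  have F: "?F \<in> TF S (TF S X)" using x by (auto simp: TF_def)
  have "h (Tmap S h ?F) = h (muT S ?F)" using alg F unfolding T_algebra_def by blast
  moreover have "Tmap S h ?F = (\<lambda>s\<in>S. (s, h (\<lambda>s'\<in>S. (s, x))))" by (auto simp: Tmap_def)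
  moreover have "muT S ?F = etaT S x" by (auto simp: muT_def etaT_def)
  moreover have "h (etaT S x) = x" using alg x unfolding T_algebra_def by blast
  ultimately show ?thesis by simp
qed

theorem mainTheorem2:
  fixes S :: "'s set" and X :: "'x set" and h :: "('s \<Rightarrow> 's \<times> 'x) \<Rightarrow> 'x"
  assumes alg: "T_algebra S X h"
  defines "Y \<equiv> {h (\<lambda>s'\<in>S. (s, x)) | s x. s \<in> S \<and> x \<in> X}"
      and "eStar \<equiv> (\<lambda>x. \<lambda>s\<in>S. h (\<lambda>s'\<in>S. (s, x)))"
      and "g \<equiv> (\<lambda>y. h (\<lambda>s\<in>S. (s, y s)))"
  shows "bij_betw eStar X (S \<rightarrow>\<^sub>E Y)
         \<and> (\<forall>x\<in>X. g (eStar x) = x)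
         \<and> (\<forall>y\<in>S \<rightarrow>\<^sub>E Y. g y \<in> X \<and> eStar (g y) = y)"
proof -
  have hX: "\<And>t. t \<in> TF S X \<Longrightarrow> h t \<in> X" using alg unfolding T_algebra_def by blast
  have YX: "Y \<subseteq> X"
  proof
    fix y assume "y \<in> Y"
    then obtain s x where "y = h (\<lambda>s'\<in>S. (s, x))" "s \<in> S" "x \<in> X" unfolding Y_def by blast
    then show "y \<in> X" using hX[of "\<lambda>s'\<in>S. (s, x)"] by (auto simp: TF_def)
  qed
  have c1: "\<forall>x\<in>X. g (eStar x) = x"
  proof
    fix x assume x: "x \<in> X"
    have "g (eStar x) = h (\<lambda>s\<in>S. (s, h (\<lambda>s'\<in>S. (s, x))))"
      unfolding g_def eStar_def
      by (rule arg_cong[where f=h]) (auto simp: restrict_def)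
    then show "g (eStar x) = x" using algB[OF alg x] by simp
  qed
  have c2: "\<forall>y\<in>S \<rightarrow>\<^sub>E Y. g y \<in> X \<and> eStar (g y) = y"
  proof
    fix y assume y: "y \<in> S \<rightarrow>\<^sub>E Y"
    have p: "(\<lambda>s\<in>S. (s, y s)) \<in> TF S X" using y YX by (auto simp: TF_def)
    have gy: "g y \<in> X" unfolding g_def using hX[OF p] .
    have "eStar (g y) s = y s" for s
    proof (cases "s \<in> S")
      case True
      have "eStar (g y) s = h (\<lambda>s'\<in>S. (s, g y))" using True by (simp add: eStar_def)
      also have "\<dots> = h (\<lambda>s'\<in>S. (\<lambda>s\<in>S. (s, y s)) s)"
        unfolding g_def by (rule algA[OF alg p True])
      also have "\<dots> = h (\<lambda>s'\<in>S. (s, y s))" using True by simp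
      also have "\<dots> = y s"
      proof -
        have "y s \<in> Y" using y True by auto
        then obtain t x where yt: "y s = h (\<lambda>s'\<in>S. (t, x))" "t \<in> S" "x \<in> X"
          unfolding Y_def by blast
        have q: "(\<lambda>s'\<in>S. (t, x)) \<in> TF S X" using yt by (auto simp: TF_def)
        have "h (\<lambda>s'\<in>S. (s, y s)) = h (\<lambda>s'\<in>S. (\<lambda>s'\<in>S. (t, x)) s)"
          unfolding yt(1) by (rule algA[OF alg q True])
        also have "\<dots> = h (\<lambda>s'\<in>S. (t, x))" using True by simp
        finally show ?thesis using yt(1) by simp
      qed
      finally show ?thesis .
    next
      case False
      then show ?thesis using y by (simp add: eStar_def PiE_def extensional_def)
    qed
    then show "g y \<in> X \<and> eStar (g y) = y" using gy by auto
  qed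
  have im: "eStar ` X \<subseteq> S \<rightarrow>\<^sub>E Y" unfolding eStar_def Y_def by (auto intro!: exI)
  have im2: "g ` (S \<rightarrow>\<^sub>E Y) \<subseteq> X" using c2 by auto
  have "bij_betw eStar X (S \<rightarrow>\<^sub>E Y)"
    by (rule bij_betw_byWitness[OF _ _ im im2]) (use c1 c2 in auto)
  then show ?thesis using c1 c2 by blast
qed

end
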